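(* For every word $\omega\in[n]^*$, the set $B^M_\omega:=M_\omega B_\omega\subseteq\mathbb{Z}^n$ is a monotone lattice path from $0$ to $u_\omega$: its elements can be listed as $x_0,x_1,\dots,x_m$ with $x_0=0$, $x_m=u_\omega$, and $x_t-x_{t-1}\in\{e_1,\dots,e_n\}$ for all $t=1,\dots,m$.
   Context: Let $[n]=\{1,\dots,n\}$, $e_1,\dots,e_n$ the standard basis of $\mathbb{Z}^n$; $\varepsilon$ is the empty word, $*$ concatenation. For words $\omega$ over $[n]$ define recursively $a^i_\omega,\delta^i_\omega\in\mathbb{Z}^n$: $a^i_\varepsilon=\delta^i_\varepsilon=e_i$; $a^i_{\omega*j}=a^i_\omega$ if $i\ne j$, $a^j_{\omega*j}=a^j_\omega+\delta^j_\omega$; $\delta^j_{\omega*j}=\delta^j_\omega$, $\delta^i_{\omega*j}=\delta^i_\omega-\delta^j_\omega$ for $i\ne j$. Let $B_\varepsilon=\{0\}$, $B_{\omega*j}=B_\omega+\{0,\delta^j_\omega\}$ (Minkowski sum). Let $M_\omega=(\delta^1_\omega\ \cdots\ \delta^n_\omega)^{-1}$ (inverse of the matrix with columns $\delta^i_\omega$). For $k\in[n]$ let $D^k=\mathrm{id}+e_k(\mathbb{1}-e_k)^T$ with $\mathbb{1}=(1,\dots,1)^T$. Define $u_\varepsilon=0$, $u_{\omega*j}=e_j+D^j u_\omega$. *)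

theory Defs
  imports "HOL-Analysis.Analysis"
begin

text \<open>The alphabet [n] is modelled by a finite type 'n (n = CARD('n)); words are lists,
  and the word omega * j is omega @ [j]. Vectors of Z^n are taken in real^'n.\<close>

definition evec :: "'n::finite \<Rightarrow> real^'n" where
  "evec i = axis i 1"

definition delta_step :: "('n::finite \<Rightarrow> real^'n) \<Rightarrow> 'n \<Rightarrow> ('n \<Rightarrow> real^'n)" where
  "delta_step d j = (\<lambda>i. if i = j then d j else d i - d j)"

definition delta :: "'n::finite list \<Rightarrow> 'n \<Rightarrow> real^'n" where
  "delta w = foldl delta_step evec w"

text \<open>B_rev (rev w) is B_w: B_eps = {0}, B_(w*j) = B_w + {0, delta^j_w}.\<close>
primrec B_rev :: "'n::finite list \<Rightarrow> (real^'n) set" where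
  "B_rev [] = {0}"
| "B_rev (j # r) = {x + y | x y. x \<in> B_rev r \<and> y \<in> {0, delta (rev r) j}}"

definition Bw :: "'n::finite list \<Rightarrow> (real^'n) set" where
  "Bw w = B_rev (rev w)"

definition Mw :: "'n::finite list \<Rightarrow> real^'n^'n" where
  "Mw w = matrix_inv (\<chi> r c. delta w c $ r)"

definition Dmat :: "'n::finite \<Rightarrow> real^'n^'n" where
  "Dmat k = mat 1 + (\<chi> r c. evec k $ r * ((\<chi> i. 1) - evec k) $ c)"

primrec u_rev :: "'n::finite list \<Rightarrow> real^'n" where
  "u_rev [] = 0"
| "u_rev (j # r) = evec j + Dmat j *v u_rev r"

definition uw :: "'n::finite list \<Rightarrow> real^'n" where
  "uw w = u_rev (rev w)"

end

theory Submission imports Defs begin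

definition Dl :: "'n::finite list \<Rightarrow> real^'n^'n" where
  "Dl w = (\<chi> r c. delta w c $ r)"

definition Nm :: "'n::finite \<Rightarrow> real^'n^'n" where
  "Nm k = (\<chi> r c. evec k $ r * ((\<chi> i. 1) - evec k) $ c)"

lemma mif1[simp]: "(x::real) * (if P then 1 else 0) = (if P then x else 0)" by simp
lemma mif2[simp]: "(if P then 1 else 0) * (x::real) = (if P then x else 0)" by simp
lemma mif3[simp]: "(x::real) * (if P then 0 else 1) = (if P then 0 else x)" by simp
lemma mif4[simp]: "(1 - (if P then 1 else 0)) = (if P then 0 else (1::real))" by simp

lemma mif5[simp]: "(if P then 0 else 1) * (x::real) = (if P then 0 else x)" by simp

lemma delta_snoc: "delta (w @ [j]) = delta_step (delta w) j"
  by (simp add: delta_def)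

lemma Dl_nil: "Dl [] = mat 1"
  by (simp add: Dl_def delta_def vec_eq_iff mat_def evec_def axis_def)

lemma Dl_snoc: "Dl (w @ [j]) = Dl w ** (mat 1 - Nm j)"
  by (simp add: Dl_def delta_snoc delta_step_def vec_eq_iff matrix_matrix_mult_def Nm_def
        mat_def evec_def axis_def algebra_simps sum_subtractf )

lemma NN: "Nm j ** Nm j = 0"
  apply (simp add: vec_eq_iff matrix_matrix_mult_def Nm_def evec_def axis_def )
  by (auto intro!: sum.neutral)

lemma Dmat_Nm: "Dmat j = mat 1 + Nm j"
  by (simp add: Dmat_def Nm_def)

lemma DE: "Dmat j ** (mat 1 - Nm j) = mat 1"
  apply (simp add: Dmat_def vec_eq_iff matrix_matrix_mult_def Nm_def mat_def evec_def axis_def algebra_simps sum.distrib sum_subtractf)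
  by (auto intro!: sum.neutral)

lemma ED: "(mat 1 - Nm j) ** Dmat j = mat 1"
  apply (simp add: Dmat_def vec_eq_iff matrix_matrix_mult_def Nm_def mat_def evec_def axis_def algebra_simps sum.distrib sum_subtractf)
  by (auto intro!: sum.neutral)

lemma minv_unique:
  fixes A B :: "real^'n::finite^'n"
  assumes "A ** B = mat 1" "B ** A = mat 1"
  shows "matrix_inv A = B"
proof -
  have ex: "\<exists>A'. A ** A' = mat 1 \<and> A' ** A = mat 1" using assms by blast
  have h: "A ** matrix_inv A = mat 1 \<and> matrix_inv A ** A = mat 1"
    unfolding matrix_inv_def by (rule someI_ex[OF ex])
  have "matrix_inv A = matrix_inv A ** (A ** B)" using assms by simp
  also have "\<dots> = (matrix_inv A ** A) ** B" by (simp add: matrix_mul_assoc)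
  also have "\<dots> = B" using h by simp
  finally show ?thesis .
qed

definition Pm :: "'n::finite list \<Rightarrow> real^'n^'n" where
  "Pm w = foldl (\<lambda>P j. Dmat j ** P) (mat 1) w"

lemma Pm_snoc: "Pm (w @ [j]) = Dmat j ** Pm w" by (simp add: Pm_def)
lemma Pm_nil: "Pm [] = mat 1" by (simp add: Pm_def)

lemma Dl_Pm: "Dl w ** Pm w = mat 1 \<and> Pm w ** Dl w = mat 1"
proof (induction w rule: rev_induct)
  case Nil then show ?case by (simp add: Dl_nil Pm_nil)
next
  case (snoc j w)
  have a: "Dl w ** (mat 1 - Nm j) ** (Dmat j ** Pm w) = Dl w ** ((mat 1 - Nm j) ** Dmat j) ** Pm w"
    by (simp add: matrix_mul_assoc)
  have b: "Dmat j ** Pm w ** (Dl w ** (mat 1 - Nm j)) = Dmat j ** (Pm w ** Dl w) ** (mat 1 - Nm j)"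
    by (simp add: matrix_mul_assoc)
  have c: "Dl w ** (mat 1 - Nm j) ** (Dmat j ** Pm w) = mat 1"
    unfolding a ED[of j] using snoc by simp
  have d: "Dmat j ** Pm w ** (Dl w ** (mat 1 - Nm j)) = mat 1"
    unfolding b using snoc DE[of j] by simp
  show ?case unfolding Pm_snoc Dl_snoc using c d by simp
qed

lemma Mw_Pm: "Mw w = Pm w"
  unfolding Mw_def Dl_def[symmetric] using Dl_Pm by (blast intro: minv_unique)

lemma Mw_snoc: "Mw (w @ [j]) = Dmat j ** Mw w"
  by (simp add: Mw_Pm Pm_snoc)

lemma delta_Dl: "delta w j = Dl w *v evec j"
  by (simp add: Dl_def vec_eq_iff matrix_vector_mult_def evec_def axis_def)

lemma Mw_delta: "Mw w *v delta w j = evec j"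
  by (simp add: delta_Dl matrix_vector_mul_assoc Mw_Pm Dl_Pm)

lemma D_ej: "Dmat j *v evec j = evec j"
  by (simp add: Dmat_def vec_eq_iff matrix_vector_mult_def mat_def evec_def axis_def algebra_simps sum.distrib)

lemma D_ei: "i \<noteq> j \<Longrightarrow> Dmat j *v evec i = evec i + evec j"
  by (simp add: Dmat_def vec_eq_iff matrix_vector_mult_def mat_def evec_def axis_def algebra_simps sum.distrib)

lemma Bw_snoc: "Bw (w @ [j]) = {x + y | x y. x \<in> Bw w \<and> y \<in> {0, delta w j}}"
  by (simp add: Bw_def)

lemma uw_snoc: "uw (w @ [j]) = evec j + Dmat j *v uw w"
  by (simp add: uw_def)

fun ext :: "real^'n^'n \<Rightarrow> real^'n \<Rightarrow> (real^'n::finite) list \<Rightarrow> (real^'n) list" where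
  "ext D e [] = []"
| "ext D e [x] = [D *v x, D *v x + e]"
| "ext D e (x # y # r) = (if y = x + e then [D *v x] else [D *v x, D *v x + e]) @ ext D e (y # r)"

definition stepP :: "real^'n::finite \<Rightarrow> real^'n \<Rightarrow> bool" where
  "stepP a b \<longleftrightarrow> b - a \<in> range evec"

lemma ext_ne: "xs \<noteq> [] \<Longrightarrow> ext D e xs \<noteq> [] \<and> hd (ext D e xs) = D *v hd xs"
  by (induction D e xs rule: ext.induct) auto

lemma ext_last: "xs \<noteq> [] \<Longrightarrow> last (ext D e xs) = D *v last xs + e"
  by (induction D e xs rule: ext.induct) (auto simp: ext_ne)

lemma ext_set: "D *v e = e \<Longrightarrow> set (ext D e xs) = (\<lambda>x. D *v x) ` set xs \<union> (\<lambda>x. D *v x + e) ` set xs"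
proof (induction D e xs rule: ext.induct)
  case (3 D e x y r)
  have "y = x + e \<Longrightarrow> D *v x + e = D *v y" using 3(2) by (simp add: matrix_vector_right_distrib)
  then show ?case using 3 by auto
qed auto

lemma ext_succ:
  "\<lbrakk>D *v e = e; \<forall>i. evec i \<noteq> e \<longrightarrow> D *v evec i = evec i + e; e \<in> range evec;
    successively stepP xs\<rbrakk> \<Longrightarrow> successively stepP (ext D e xs)"
proof (induction D e xs rule: ext.induct)
  case (2 D e x)
  then show ?case by (simp add: stepP_def)
next
  case (3 D e x y r)
  have IH: "successively stepP (ext D e (y # r))" using 3 by simp
  have h: "hd (ext D e (y # r)) = D *v y" "ext D e (y # r) \<noteq> []" using ext_ne[of "y # r" D e] by auto
  obtain i where i: "y - x = evec i" using 3(5) by (auto simp: stepP_def)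
  show ?case
  proof (cases "y = x + e")
    case True
    have "D *v y - D *v x = e" using True 3(2) by (simp add: matrix_vector_right_distrib)
    then show ?thesis using True IH h 3(4) by (simp add: successively_append_iff successively_Cons stepP_def)
  next
    case False
    have ne: "evec i \<noteq> e" using False i by (metis add_diff_cancel_left' diff_add_cancel)
    have "D *v y - (D *v x + e) = D *v (y - x) - e" by (simp add: matrix_vector_mult_diff_distrib)
    also have "\<dots> = evec i" using i ne 3(3) by simp
    finally have "D *v y - (D *v x + e) = evec i" .
    then show ?thesis using False IH h 3(4) by (simp add: successively_append_iff successively_Cons stepP_def)
  qed
qed auto

lemma main_inv:
  "\<exists>xs. xs \<noteq> [] \<and> successively stepP xs \<and> set xs = (\<lambda>x. Mw w *v x) ` Bw w \<and>
        hd xs = 0 \<and> last xs = uw w"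
proof (induction w rule: rev_induct)
  case Nil
  show ?case by (rule exI[of _ "[0]"]) (simp add: Bw_def uw_def)
next
  case (snoc j w)
  then obtain xs where xs: "xs \<noteq> []" "successively stepP xs" "set xs = (\<lambda>x. Mw w *v x) ` Bw w"
    "hd xs = 0" "last xs = uw w" by blast
  let ?D = "Dmat j" and ?e = "evec j"
  have De: "?D *v ?e = ?e" by (rule D_ej)
  have Di: "\<forall>i. evec i \<noteq> ?e \<longrightarrow> ?D *v evec i = evec i + ?e"
    using D_ei by metis
  have set: "set (ext ?D ?e xs) = (\<lambda>x. Mw (w @ [j]) *v x) ` Bw (w @ [j])"
  proof -
    have "(\<lambda>x. Mw (w @ [j]) *v x) ` Bw (w @ [j])
       = (\<lambda>x. ?D *v (Mw w *v x)) ` Bw w \<union> (\<lambda>x. ?D *v (Mw w *v x) + ?e) ` Bw w"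
    proof (rule set_eqI, rule iffI)
      fix z assume "z \<in> (\<lambda>x. Mw (w @ [j]) *v x) ` Bw (w @ [j])"
      then show "z \<in> (\<lambda>x. ?D *v (Mw w *v x)) ` Bw w \<union> (\<lambda>x. ?D *v (Mw w *v x) + ?e) ` Bw w"
        unfolding Bw_snoc Mw_snoc
        by (auto simp: matrix_vector_mul_assoc[symmetric] matrix_vector_right_distrib Mw_delta De)
    next
      fix z assume "z \<in> (\<lambda>x. ?D *v (Mw w *v x)) ` Bw w \<union> (\<lambda>x. ?D *v (Mw w *v x) + ?e) ` Bw w"
      then obtain x where x: "x \<in> Bw w" and "z = ?D *v (Mw w *v x) \<or> z = ?D *v (Mw w *v x) + ?e" by blast
      then consider "z = Mw (w @ [j]) *v (x + 0)" | "z = Mw (w @ [j]) *v (x + delta w j)"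
        unfolding Mw_snoc
        by (auto simp: matrix_vector_mul_assoc[symmetric] matrix_vector_right_distrib Mw_delta De)
      then show "z \<in> (\<lambda>x. Mw (w @ [j]) *v x) ` Bw (w @ [j])"
      proof cases
        case 1 then show ?thesis unfolding Bw_snoc using x by blast
      next
        case 2 then show ?thesis unfolding Bw_snoc using x by blast
      qed
    qed
    also have "\<dots> = set (ext ?D ?e xs)" unfolding ext_set[OF De] xs(3) by auto
    finally show ?thesis by simp
  qed
  show ?case
    apply (rule exI[of _ "ext ?D ?e xs"])
    using ext_ne[OF xs(1), of ?D ?e] ext_last[OF xs(1), of ?D ?e] ext_succ[OF De Di _ xs(2)] set xs
    by (simp add: uw_snoc)
qed

definition csum :: "real^'n::finite \<Rightarrow> real" where "csum x = (\<Sum>i\<in>UNIV. x $ i)"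

lemma csum_step: "stepP a b \<Longrightarrow> csum a < csum b"
proof -
  assume "stepP a b"
  then obtain i where "b - a = evec i" by (auto simp: stepP_def)
  have "csum b - csum a = csum (b - a)" by (simp add: csum_def sum_subtractf)
  then have "csum b - csum a = csum (evec i)" using \<open>b - a = evec i\<close> by simp
  also have "\<dots> = 1" by (simp add: csum_def evec_def axis_def)
  finally show ?thesis by simp
qed

lemma sorted_wrt_irrefl_distinct: "(\<And>x. \<not> R x x) \<Longrightarrow> sorted_wrt R xs \<Longrightarrow> distinct xs"
  by (induction xs) auto

lemma succ_distinct: "successively stepP xs \<Longrightarrow> distinct xs"
proof -
  assume "successively stepP xs"
  then have "successively (\<lambda>a b. csum a < csum b) xs" by (rule successively_mono) (rule csum_step)
  then have "sorted_wrt (\<lambda>a b. csum a < csum b) xs"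
    by (subst (asm) successively_conv_sorted_wrt) (auto simp: transp_def)
  then show ?thesis by (rule sorted_wrt_irrefl_distinct[rotated]) simp
qed

theorem lemma3p2:
  fixes w :: "'n::finite list"
  shows "\<exists>xs :: (real^'n) list.
           xs \<noteq> [] \<and> distinct xs \<and>
           set xs = (\<lambda>x. Mw w *v x) ` Bw w \<and>
           hd xs = 0 \<and> last xs = uw w \<and>
           (\<forall>t. 0 < t \<and> t < length xs \<longrightarrow> xs ! t - xs ! (t - 1) \<in> range evec)"
proof -
  obtain xs where xs: "xs \<noteq> []" "successively stepP xs" "set xs = (\<lambda>x. Mw w *v x) ` Bw w"
    "hd xs = 0" "last xs = uw w" using main_inv by blast
  have "\<forall>t. 0 < t \<and> t < length xs \<longrightarrow> xs ! t - xs ! (t - 1) \<in> range evec"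
  proof (intro allI impI)
    fix t assume t: "0 < t \<and> t < length xs"
    then obtain s where s: "t = Suc s" by (cases t) auto
    show "xs ! t - xs ! (t - 1) \<in> range evec"
      using successively_nth[OF xs(2), of s] t s by (simp add: stepP_def)
  qed
  then show ?thesis using xs succ_distinct by blast
qed

end
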